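(* Let $G$ be a finite simple graph on vertex set $\{x_1,\dots,x_n\}$, let $\Bbbk$ be a field and $S=\Bbbk[x_1,\dots,x_n]$. Let $x$ be a leaf of $G$ with neighbor $y$. Then for all $k\geq 2$, \[I(G)^{[k]}:(xy)=I(G-\{x,y\})^{[k-1]},\] both considered as ideals of $S$.
   Context: A leaf is a vertex of degree $1$. $G-U$ is the induced subgraph on $V(G)\setminus U$. For a graph $H$ with vertices among $x_1,\dots,x_n$ and $k\ge1$, $I(H)^{[k]}$ is the ideal generated by the products $e_1\cdots e_k$ over all matchings $\{e_1,\dots,e_k\}$ of $H$ of size $k$ (edge $\{x_i,x_j\}$ identified with the monomial $x_ix_j$); it is $(0)$ if $k$ exceeds the matching number of $H$. $I:(m)=\{f\in S: fm\in I\}$. *)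

theory Defs
  imports "HOL-Library.Poly_Mapping"
begin

text \<open>Polynomial ring S = k[x_v : v in 'v] over the finite variable type 'v:
  polynomials are finitely supported maps from monomials (exponent vectors) to coefficients.\<close>
type_synonym ('v, 'k) mpoly = "('v \<Rightarrow>\<^sub>0 nat) \<Rightarrow>\<^sub>0 'k"

definition var :: "'v \<Rightarrow> ('v, 'k::comm_semiring_1) mpoly" where
  "var v = Poly_Mapping.single (Poly_Mapping.single v 1) 1"

definition simple_graph :: "'v set set \<Rightarrow> bool" where
  "simple_graph E \<longleftrightarrow> (\<forall>e\<in>E. card e = 2)"

definition degree :: "'v set set \<Rightarrow> 'v \<Rightarrow> nat" where
  "degree E v = card {e\<in>E. v \<in> e}"

definition is_leaf :: "'v set set \<Rightarrow> 'v \<Rightarrow> bool" where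
  "is_leaf E v \<longleftrightarrow> degree E v = 1"

definition delete_vertices :: "'v set set \<Rightarrow> 'v set \<Rightarrow> 'v set set" where
  "delete_vertices E U = {e\<in>E. e \<inter> U = {}}"

definition matching :: "'v set set \<Rightarrow> 'v set set \<Rightarrow> bool" where
  "matching E M \<longleftrightarrow> M \<subseteq> E \<and> (\<forall>e\<in>M. \<forall>f\<in>M. e \<noteq> f \<longrightarrow> e \<inter> f = {})"

definition edge_monomial :: "'v set \<Rightarrow> ('v, 'k::comm_semiring_1) mpoly" where
  "edge_monomial e = (\<Prod>v\<in>e. var v)"

definition ideal_gen :: "'a::comm_ring_1 set \<Rightarrow> 'a set" where
  "ideal_gen A = {f. \<exists>B c. finite B \<and> B \<subseteq> A \<and> f = (\<Sum>b\<in>B. c b * b)}"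

definition colon_ideal :: "'a::comm_ring_1 set \<Rightarrow> 'a \<Rightarrow> 'a set" where
  "colon_ideal I m = {f. f * m \<in> I}"

text \<open>Square-free power I(H)^[k]: generated by products of the edges of k-matchings.
  It is the zero ideal if no such matching exists (ideal_gen of empty set = {0}).\<close>
definition sqfree_power :: "'v set set \<Rightarrow> nat \<Rightarrow> ('v, 'k::comm_ring_1) mpoly set" where
  "sqfree_power E k = ideal_gen
     {(\<Prod>e\<in>M. edge_monomial e) | M. matching E M \<and> finite M \<and> card M = k}"

end

theory Submission
  imports Defs HOL.Modules
begin

lemma module_mult: "module ((*) :: 'a::comm_ring_1 \<Rightarrow> 'a \<Rightarrow> 'a)"
  by unfold_locales (auto simp: algebra_simps)
interpretation rmod: module "(*) :: 'a::comm_ring_1 \<Rightarrow> 'a \<Rightarrow> 'a" by (rule module_mult)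

lemma ideal_gen_span: "ideal_gen A = rmod.span A"
  unfolding ideal_gen_def rmod.span_explicit by blast

lemma ideal_gen_base: "a \<in> A \<Longrightarrow> a \<in> ideal_gen A"
  unfolding ideal_gen_span by (rule rmod.span_base)

lemma ideal_gen_mult: "a \<in> ideal_gen A \<Longrightarrow> r * a \<in> ideal_gen A"
  unfolding ideal_gen_span by (rule rmod.span_scale)

lemma ideal_gen_sum: "(\<And>x. x \<in> S \<Longrightarrow> f x \<in> ideal_gen A) \<Longrightarrow> sum f S \<in> ideal_gen A"
  unfolding ideal_gen_span by (rule rmod.span_sum)

definition ind :: "'v set \<Rightarrow> 'v \<Rightarrow>\<^sub>0 nat" where
  "ind A = (\<Sum>v\<in>A. Poly_Mapping.single v 1)"

lemma lookup_ind: "finite A \<Longrightarrow> Poly_Mapping.lookup (ind A) v = (if v \<in> A then 1 else 0)"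
  unfolding ind_def lookup_sum lookup_single by (simp add: when_def)

lemma prod_single: "(\<Prod>i\<in>S. Poly_Mapping.single (f i) (1::'k::comm_semiring_1)) = Poly_Mapping.single (\<Sum>i\<in>S. f i) 1"
  by (induction S rule: infinite_finite_induct) (auto simp: mult_single)

lemma edge_monomial_ind: "finite e \<Longrightarrow> (edge_monomial e :: ('v,'k::comm_semiring_1) mpoly) = Poly_Mapping.single (ind e) 1"
  unfolding edge_monomial_def var_def ind_def by (rule prod_single)

lemma prod_edges:
  fixes M :: "('v::finite) set set"
  assumes "\<forall>e\<in>M. \<forall>f\<in>M. e \<noteq> f \<longrightarrow> e \<inter> f = {}"
  shows "(\<Prod>e\<in>M. edge_monomial e :: ('v,'k::comm_semiring_1) mpoly) = Poly_Mapping.single (ind (\<Union>M)) 1"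
proof -
  have "(\<Prod>e\<in>M. edge_monomial e :: ('v,'k) mpoly) = (\<Prod>e\<in>M. Poly_Mapping.single (ind e) 1)"
    by (simp add: edge_monomial_ind)
  also have "\<dots> = Poly_Mapping.single (\<Sum>e\<in>M. ind e) 1" by (rule prod_single)
  also have "(\<Sum>e\<in>M. ind e) = ind (\<Union>M)"
    unfolding ind_def using sum.Union_disjoint[of M "\<lambda>v. Poly_Mapping.single v (1::nat)"] assms by simp
  finally show ?thesis .
qed

definition divm :: "('v \<Rightarrow>\<^sub>0 nat) \<Rightarrow> ('v,'k::comm_ring_1) mpoly \<Rightarrow> ('v,'k) mpoly" where
  "divm u p = Poly_Mapping.Abs_poly_mapping (\<lambda>n. Poly_Mapping.lookup p (n + u))"

lemma lookup_divm: "Poly_Mapping.lookup (divm u p) n = Poly_Mapping.lookup p (n + u)"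
proof -
  have "{n. Poly_Mapping.lookup p (n + u) \<noteq> 0} \<subseteq> (\<lambda>m. m - u) ` {m. Poly_Mapping.lookup p m \<noteq> 0}"
    by (auto intro!: image_eqI)
  then have "finite {n. Poly_Mapping.lookup p (n + u) \<noteq> 0}" by (rule finite_subset) simp
  then show ?thesis unfolding divm_def by simp
qed

lemma divm_add: "divm u (p + q) = divm u p + divm u q"
  by (rule poly_mapping_eqI) (simp add: lookup_divm lookup_add)

lemma divm_sum: "divm u (sum f S) = (\<Sum>i\<in>S. divm u (f i))"
  by (rule poly_mapping_eqI) (simp add: lookup_divm lookup_sum)


lemma divm_single: "divm u (Poly_Mapping.single m c) = (if (\<exists>n. m = n + u) then Poly_Mapping.single (m - u) c else 0)"
  by (rule poly_mapping_eqI) (auto simp: lookup_divm lookup_single when_def)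

lemma expand: "p = (\<Sum>a\<in>Poly_Mapping.keys p. Poly_Mapping.single a (Poly_Mapping.lookup p a))"
  by (rule poly_mapping_eqI) (simp add: lookup_sum lookup_single when_def in_keys_iff)

lemma mult_single_expand: "(p::(_,_::comm_semiring_1) mpoly) * Poly_Mapping.single w 1 = (\<Sum>a\<in>Poly_Mapping.keys p. Poly_Mapping.single (a + w) (Poly_Mapping.lookup p a))"
  by (subst expand[of p]) (simp add: sum_distrib_right mult_single)

lemma ex_add_u: "\<exists>n. a + u = n + (u::'v \<Rightarrow>\<^sub>0 nat)" by blast

lemma divm_mult: "divm u (p * Poly_Mapping.single u 1) = p"
proof -
  have "p * Poly_Mapping.single u 1 = (\<Sum>a\<in>Poly_Mapping.keys p. Poly_Mapping.single (a + u) (Poly_Mapping.lookup p a))"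
    by (subst expand[of p]) (simp add: sum_distrib_right mult_single)
  then have "divm u (p * Poly_Mapping.single u 1) = (\<Sum>a\<in>Poly_Mapping.keys p. Poly_Mapping.single a (Poly_Mapping.lookup p a))"
    by (simp only: divm_sum divm_single add_diff_cancel_right' ex_add_u simp_thms if_True)
  then show ?thesis using expand[of p] by simp
qed

lemma leaf_edges:
  assumes "is_leaf E x" "{x, y} \<in> E" "finite E"
  shows "{e\<in>E. x \<in> e} = {{x,y}}"
proof -
  have "card {e\<in>E. x \<in> e} = 1" using assms(1) unfolding is_leaf_def degree_def .
  then obtain a where a: "{e\<in>E. x \<in> e} = {a}" by (rule card_1_singletonE)
  moreover have "{x,y} \<in> {e\<in>E. x \<in> e}" using assms(2) by simp
  ultimately show ?thesis by auto
qed

lemma comb: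
  fixes E :: "('v::finite) set set"
  assumes "is_leaf E x" "{x, y} \<in> E" "matching E M" "card M = k" "k \<ge> 1"
  shows "\<exists>M'. M' \<subseteq> M \<and> card M' = k - 1 \<and> (\<forall>e\<in>M'. e \<inter> {x,y} = {})"
proof -
  have fin: "finite M" "finite E" by auto
  have lf: "{e\<in>E. x \<in> e} = {{x,y}}" by (rule leaf_edges[OF assms(1,2) fin(2)])
  have ME: "M \<subseteq> E" and dis: "\<forall>e\<in>M. \<forall>f\<in>M. e \<noteq> f \<longrightarrow> e \<inter> f = {}"
    using assms(3) unfolding matching_def by auto
  have yin: "y \<in> e" if "e \<in> M" "e \<inter> {x,y} \<noteq> {}" for e
  proof -
    have "e = {x,y}" if "x \<in> e"
    proof -
      have "e \<in> {e\<in>E. x \<in> e}" using ME \<open>e \<in> M\<close> that by auto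
      then show ?thesis using lf by simp
    qed
    then show ?thesis using that(2) by auto
  qed
  have uniq: "e = f" if "e \<in> M" "f \<in> M" "e \<inter> {x,y} \<noteq> {}" "f \<inter> {x,y} \<noteq> {}" for e f
  proof (rule ccontr)
    assume "e \<noteq> f"
    then have "e \<inter> f = {}" using dis that(1,2) by auto
    then show False using yin[OF that(1,3)] yin[OF that(2,4)] by auto
  qed
  show ?thesis
  proof (cases "\<exists>e\<in>M. e \<inter> {x,y} \<noteq> {}")
    case True
    then obtain e where e: "e \<in> M" "e \<inter> {x,y} \<noteq> {}" by blast
    show ?thesis
      apply (rule exI[of _ "M - {e}"])
    proof (intro conjI ballI)
      show "card (M - {e}) = k - 1" using e fin assms(4) by simp
    next
      fix f assume "f \<in> M - {e}"
      then show "f \<inter> {x,y} = {}" using uniq[of e f] e by auto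
    qed auto
  next
    case False
    have "M \<noteq> {}" using assms(4,5) by auto
    then obtain e where e: "e \<in> M" by blast
    show ?thesis
      apply (rule exI[of _ "M - {e}"])
      using e False fin assms(4) by simp
  qed
qed

lemma keyK:
  fixes E :: "('v::finite) set set" and x y :: 'v and a :: "'v \<Rightarrow>\<^sub>0 nat" and c :: "'k::comm_ring_1"
  assumes "matching (delete_vertices E {x,y}) M'" "card M' = j" "\<Union>M' \<subseteq> A" "\<Union>M' \<inter> {x,y} = {}"
  shows "divm (ind {x,y}) (Poly_Mapping.single (a + ind A) c) \<in> sqfree_power (delete_vertices E {x,y}) j"
proof (cases "\<exists>n. a + ind A = n + ind {x,y}")
  case False
  then have "divm (ind {x,y}) (Poly_Mapping.single (a + ind A) c) = 0" by (simp add: divm_single)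
  moreover have "(0::('v,'k) mpoly) \<in> sqfree_power (delete_vertices E {x,y}) j"
    unfolding sqfree_power_def using ideal_gen_sum[of "{}"] by simp
  ultimately show ?thesis by simp
next
  case True
  then obtain n where n: "a + ind A = n + ind {x,y}" by blast
  have dv: "divm (ind {x,y}) (Poly_Mapping.single (a + ind A) c) = Poly_Mapping.single n c"
    using True n by (simp add: divm_single)
  have ge: "Poly_Mapping.lookup n v \<ge> 1" if "v \<in> \<Union>M'" for v
  proof -
    have "Poly_Mapping.lookup (a + ind A) v = Poly_Mapping.lookup (n + ind {x,y}) v" using n by simp
    then have "Poly_Mapping.lookup a v + Poly_Mapping.lookup (ind A) v = Poly_Mapping.lookup n v + Poly_Mapping.lookup (ind {x,y}) v"
      by (simp add: lookup_add)
    moreover have "v \<notin> {x,y}" "v \<in> A" using that assms(3,4) by auto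
    ultimately show ?thesis by (simp add: lookup_ind)
  qed
  define r where "r = n - ind (\<Union>M')"
  have nr: "n = r + ind (\<Union>M')"
  proof (rule poly_mapping_eqI)
    fix v
    show "Poly_Mapping.lookup n v = Poly_Mapping.lookup (r + ind (\<Union>M')) v"
      using ge[of v] unfolding r_def by (auto simp: lookup_add lookup_minus lookup_ind)
  qed
  have dis: "\<forall>e\<in>M'. \<forall>f\<in>M'. e \<noteq> f \<longrightarrow> e \<inter> f = {}" using assms(1) unfolding matching_def by blast
  have "Poly_Mapping.single n c = Poly_Mapping.single r c * (\<Prod>e\<in>M'. edge_monomial e :: ('v,'k) mpoly)"
    by (simp add: prod_edges[OF dis] mult_single nr)
  moreover have "(\<Prod>e\<in>M'. edge_monomial e :: ('v,'k) mpoly) \<in> sqfree_power (delete_vertices E {x,y}) j"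
    unfolding sqfree_power_def by (rule ideal_gen_base) (use assms(1,2) in auto)
  ultimately show ?thesis using dv by (simp add: ideal_gen_mult sqfree_power_def)
qed

theorem lemma4p4:
  fixes E :: "('v::finite) set set" and x y :: 'v and k :: nat
  assumes "simple_graph E"
    and "is_leaf E x"
    and "{x, y} \<in> E"
    and "k \<ge> 2"
  shows "colon_ideal (sqfree_power E k :: ('v, 'k::field) mpoly set) (var x * var y)
           = sqfree_power (delete_vertices E {x, y}) (k - 1)"
proof -
  have "card {x,y} = 2" using assms(1,3) unfolding simple_graph_def by blast
  then have xy: "x \<noteq> y" by auto
  have one_le_k: "1 \<le> k" using assms(4) by simp
  define u where "u = ind {x,y}"
  have xyu: "(var x * var y :: ('v,'k) mpoly) = Poly_Mapping.single u 1"
    using edge_monomial_ind[of "{x,y}"] xy unfolding u_def edge_monomial_def by simp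
  show ?thesis
  proof (intro set_eqI iffI)
    fix f :: "('v,'k) mpoly"
    assume "f \<in> sqfree_power (delete_vertices E {x, y}) (k - 1)"
    then obtain B c where B: "finite B" "B \<subseteq> {(\<Prod>e\<in>M. edge_monomial e) | M. matching (delete_vertices E {x, y}) M \<and> finite M \<and> card M = k - 1}"
      and f: "f = (\<Sum>b\<in>B. c b * b)"
      unfolding sqfree_power_def ideal_gen_def by blast
    have "f * (var x * var y) = (\<Sum>b\<in>B. c b * (b * (var x * var y)))"
      unfolding f sum_distrib_right by (simp only: mult.assoc)
    also have "\<dots> \<in> sqfree_power E k"
      unfolding sqfree_power_def
    proof (rule ideal_gen_sum, rule ideal_gen_mult)
      fix b assume "b \<in> B"
      then obtain N where N: "matching (delete_vertices E {x, y}) N" "finite N" "card N = k - 1"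
        and b: "b = (\<Prod>e\<in>N. edge_monomial e)" using B by blast
      have nin: "{x,y} \<notin> N" using N(1) unfolding matching_def delete_vertices_def by auto
      have "b * (var x * var y) = (var x * var y) * b" by (rule mult.commute)
      also have "\<dots> = edge_monomial {x,y} * b" using xy by (simp add: edge_monomial_def)
      also have "\<dots> = (\<Prod>e\<in>insert {x,y} N. edge_monomial e)" using nin N(2) by (simp add: b)
      finally have "b * (var x * var y) = (\<Prod>e\<in>insert {x,y} N. edge_monomial e)" .
      moreover have "matching E (insert {x,y} N)"
        using N(1) assms(3) unfolding matching_def delete_vertices_def by blast
      moreover have "card (insert {x,y} N) = k" using nin N assms(4) by simp
      ultimately show "b * (var x * var y) \<in> ideal_gen {(\<Prod>e\<in>M. edge_monomial e) | M. matching E M \<and> finite M \<and> card M = k}"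
        using N(2) by (intro ideal_gen_base) blast
    qed
    finally show "f \<in> colon_ideal (sqfree_power E k) (var x * var y)" unfolding colon_ideal_def by simp
  next
    fix f :: "('v,'k) mpoly"
    fix f :: "('v,'k) mpoly"
    assume "f \<in> colon_ideal (sqfree_power E k) (var x * var y)"
    then obtain B c where B: "finite B" "B \<subseteq> {(\<Prod>e\<in>M. edge_monomial e) | M. matching E M \<and> finite M \<and> card M = k}"
      and f: "f * (var x * var y) = (\<Sum>b\<in>B. c b * b)"
      unfolding colon_ideal_def sqfree_power_def ideal_gen_def by blast
    have "f = divm u (f * (var x * var y))" by (simp add: xyu divm_mult)
    also have "\<dots> = (\<Sum>b\<in>B. divm u (c b * b))" by (simp only: f divm_sum)
    also have "\<dots> \<in> sqfree_power (delete_vertices E {x, y}) (k - 1)"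
      unfolding sqfree_power_def
    proof (rule ideal_gen_sum)
      fix b assume "b \<in> B"
      show "divm u (c b * b) \<in> ideal_gen {(\<Prod>e\<in>M. edge_monomial e) | M. matching (delete_vertices E {x, y}) M \<and> finite M \<and> card M = k - 1}"
      proof -
      from \<open>b \<in> B\<close> obtain M where M: "matching E M" "finite M" "card M = k"
        and b: "b = (\<Prod>e\<in>M. edge_monomial e)" using B by blast
      obtain M' where M': "M' \<subseteq> M" "card M' = k - 1" "\<forall>e\<in>M'. e \<inter> {x,y} = {}"
        using comb[OF assms(2,3) M(1,3) one_le_k] by blast
      have mM': "matching (delete_vertices E {x,y}) M'"
        unfolding matching_def delete_vertices_def
      proof (intro conjI)
        show "M' \<subseteq> {e\<in>E. e \<inter> {x,y} = {}}" using M(1) M'(1,3) unfolding matching_def by auto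
        show "\<forall>e\<in>M'. \<forall>f\<in>M'. e \<noteq> f \<longrightarrow> e \<inter> f = {}" using M(1) M'(1) unfolding matching_def by blast
      qed
      have dis: "\<forall>e\<in>M. \<forall>f\<in>M. e \<noteq> f \<longrightarrow> e \<inter> f = {}" using M(1) unfolding matching_def by blast
      have bs: "b = Poly_Mapping.single (ind (\<Union>M)) 1" using prod_edges[OF dis] b by (simp only:)
      have "c b * b = (\<Sum>a\<in>Poly_Mapping.keys (c b). Poly_Mapping.single (a + ind (\<Union>M)) (Poly_Mapping.lookup (c b) a))"
        by (simp only: bs mult_single_expand)
      then have "divm u (c b * b) = (\<Sum>a\<in>Poly_Mapping.keys (c b). divm u (Poly_Mapping.single (a + ind (\<Union>M)) (Poly_Mapping.lookup (c b) a)))"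
        by (simp only: divm_sum)
      also have "\<dots> \<in> sqfree_power (delete_vertices E {x, y}) (k - 1)"
        unfolding u_def sqfree_power_def
        by (rule ideal_gen_sum, rule keyK[OF mM' M'(2), unfolded sqfree_power_def])
           (use M'(1,3) in auto)
      finally show ?thesis by (simp only: sqfree_power_def)
      qed
    qed
    finally show "f \<in> sqfree_power (delete_vertices E {x, y}) (k - 1)" .
  qed
qed

end
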